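(* Let $N$ be a $4$-manifold, $\rho$ a twisted scalar density of weight $1$, $A,B\in\Omega_2(N)$, $f\in\widetilde C^\infty(N)$, and let $\kappa\in\widetilde\Omega^2_2(N)$ be defined by $\kappa=\rho\,(\overline A\otimes B+\overline B\otimes A)+f\operatorname{Id}$, i.e. in local coordinates $\kappa^{ij}_{rs}=\rho\,\varepsilon_{rsab}(A^{ab}B^{ij}+A^{ij}B^{ab})+f(\delta^i_r\delta^j_s-\delta^i_s\delta^j_r)$. If $\kappa|_p=0$ at a point $p\in N$, then $f|_p=0$, and moreover $\rho|_p=0$ or $A|_p=0$ or $B|_p=0$.
   Context: $N$ is a smooth 4-manifold; Einstein summation; $\varepsilon_{ijkl}$ is the Levi-Civita permutation symbol. A twisted scalar density $\rho$ of weight $1$ is given in each chart by a function transforming as $\tilde\rho=\operatorname{sgn}\det(\partial x^a/\partial\tilde x^b)\,\det(\partial x^i/\partial\tilde x^j)\,\rho$. $\widetilde C^\infty(N)$ denotes twisted functions (transforming with the factor $\operatorname{sgn}\det(\partial x^a/\partial\tilde x^b)$). $\Omega_2(N)$ denotes bivector fields $A=\frac12A^{ij}\partial_i\wedge\partial_j$. $\widetilde\Omega^2_2(N)$ is the space of twisted tensor fields written locally as $\frac18\kappa^{ij}_{rs}\,dx^r\wedge dx^s\otimes\partial_i\wedge\partial_j$ with components antisymmetric in $ij$ and in $rs$; $\operatorname{Id}$ denotes the identity with components $\delta^i_r\delta^j_s-\delta^i_s\delta^j_r$. *)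

theory Defs
  imports Complex_Main
begin

text \<open>Pointwise (chart) description. Coordinate indices are 0,1,2,3 (naturals below 4).\<close>

definition levi_civita :: "nat \<Rightarrow> nat \<Rightarrow> nat \<Rightarrow> nat \<Rightarrow> real" where
  "levi_civita a b c d =
     (let xs = [a, b, c, d] in
      if distinct xs \<and> set xs \<subseteq> {..<4}
      then (-1) ^ card {(i, j). i < j \<and> j < 4 \<and> xs ! j < xs ! i}
      else 0)"

definition kron :: "nat \<Rightarrow> nat \<Rightarrow> real" where
  "kron i j = (if i = j then 1 else 0)"

definition antisym4 :: "(nat \<Rightarrow> nat \<Rightarrow> real) \<Rightarrow> bool" where
  "antisym4 A \<longleftrightarrow> (\<forall>i<4. \<forall>j<4. A i j = - A j i)"

definition zero4 :: "(nat \<Rightarrow> nat \<Rightarrow> real) \<Rightarrow> bool" where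
  "zero4 A \<longleftrightarrow> (\<forall>i<4. \<forall>j<4. A i j = 0)"

definition kappa :: "real \<Rightarrow> (nat \<Rightarrow> nat \<Rightarrow> real) \<Rightarrow> (nat \<Rightarrow> nat \<Rightarrow> real) \<Rightarrow> real
    \<Rightarrow> nat \<Rightarrow> nat \<Rightarrow> nat \<Rightarrow> nat \<Rightarrow> real" where
  "kappa \<rho> A B f i j r s =
     \<rho> * (\<Sum>a<4. \<Sum>b<4. levi_civita r s a b * (A a b * B i j + A i j * B a b))
     + f * (kron i r * kron j s - kron i s * kron j r)"

end

theory Submission imports Defs begin
lemma sum4: "(\<Sum>a<(4::nat). g a) = g 0 + g 1 + g 2 + (g 3::real)"
  by (simp add: eval_nat_numeral)
lemma pairs_eq: "{(i::nat, j). i < j \<and> j < 4 \<and> P i j} = set (filter (\<lambda>(i,j). P i j) [(0,1),(0,2),(0,3),(1,2),(1,3),(2,3)])"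
  by (auto simp: less_Suc_eq numeral_eq_Suc)
lemma lc_eval: "levi_civita a b c d =
     (let xs = [a, b, c, d] in
      if distinct xs \<and> set xs \<subseteq> {..<4}
      then (-1) ^ length (filter (\<lambda>(i,j). xs ! j < xs ! i) [(0,1),(0,2),(0,3),(1,2),(1,3),(2,3)])
      else 0)"
  unfolding levi_civita_def Let_def pairs_eq
  by (subst distinct_card[symmetric]) (auto intro: distinct_filter)
definition bar :: "(nat \<Rightarrow> nat \<Rightarrow> real) \<Rightarrow> nat \<Rightarrow> nat \<Rightarrow> real" where
  "bar X r s = (\<Sum>a<4. \<Sum>b<4. levi_civita r s a b * X a b)"

lemma sum_split: "(\<Sum>a\<in>S. \<Sum>b\<in>T. (l a b::real) * (x a b * y + z * w a b)) = (\<Sum>a\<in>S. \<Sum>b\<in>T. l a b * x a b) * y + z * (\<Sum>a\<in>S. \<Sum>b\<in>T. l a b * w a b)"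
proof -
  have "(\<Sum>a\<in>S. \<Sum>b\<in>T. (l a b::real) * (x a b * y + z * w a b)) = (\<Sum>a\<in>S. \<Sum>b\<in>T. (l a b * x a b) * y + z * (l a b * w a b))"
    by (intro sum.cong refl) (simp add: distrib_left mult.assoc mult.left_commute)
  also have "\<dots> = (\<Sum>a\<in>S. \<Sum>b\<in>T. l a b * x a b) * y + z * (\<Sum>a\<in>S. \<Sum>b\<in>T. l a b * w a b)"
    by (simp only: sum.distrib sum_distrib_left sum_distrib_right)
  finally show ?thesis .
qed

lemma kappa_bar: "kappa \<rho> A B f i j r s = \<rho> * (bar A r s * B i j + A i j * bar B r s) + f * (kron i r * kron j s - kron i s * kron j r)"
  unfolding kappa_def bar_def sum_split ..
lemma anti:
  assumes "antisym4 X"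
  shows "X 3 2 = - X 2 3" "X 3 1 = - X 1 3" "X 2 1 = - X 1 2" "X 3 0 = - X 0 3" "X 2 0 = - X 0 2" "X 1 0 = - X 0 1"
    "X 0 0 = 0" "X 1 1 = 0" "X 2 2 = 0" "X 3 3 = 0"
proof -
  have h: "\<And>i j. i<4 \<Longrightarrow> j<4 \<Longrightarrow> X i j = - X j i" using assms unfolding antisym4_def by blast
  show "X 3 2 = - X 2 3" "X 3 1 = - X 1 3" "X 2 1 = - X 1 2" "X 3 0 = - X 0 3" "X 2 0 = - X 0 2" "X 1 0 = - X 0 1"
    using h[of 3 2] h[of 3 1] h[of 2 1] h[of 3 0] h[of 2 0] h[of 1 0] by simp_all
  show "X 0 0 = 0" "X 1 1 = 0" "X 2 2 = 0" "X 3 3 = 0"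
    using h[of 0 0] h[of 1 1] h[of 2 2] h[of 3 3] by simp_all
qed

lemma bar_raw:
  "bar X 0 1 = X 2 3 - X 3 2" "bar X 0 2 = X 3 1 - X 1 3" "bar X 0 3 = X 1 2 - X 2 1"
  "bar X 1 2 = X 0 3 - X 3 0" "bar X 1 3 = X 2 0 - X 0 2" "bar X 2 3 = X 0 1 - X 1 0"
  unfolding bar_def sum4 by (simp_all add: lc_eval)

lemma bar_vals:
  assumes "antisym4 X"
  shows "bar X 0 1 = 2 * X 2 3" "bar X 0 2 = -2 * X 1 3" "bar X 0 3 = 2 * X 1 2"
        "bar X 1 2 = 2 * X 0 3" "bar X 1 3 = -2 * X 0 2" "bar X 2 3 = 2 * X 0 1"
  unfolding bar_raw using anti[OF assms] by simp_all

definition det3 :: "real \<Rightarrow> real \<Rightarrow> real \<Rightarrow> real \<Rightarrow> real \<Rightarrow> real \<Rightarrow> real \<Rightarrow> real \<Rightarrow> real \<Rightarrow> real" where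
  "det3 m11 m12 m13 m21 m22 m23 m31 m32 m33 =
     m11*(m22*m33 - m23*m32) - m12*(m21*m33-m23*m31) + m13*(m21*m32 - m22*m31)"

lemma det_rank2:
  "det3 (r*(u1*v1 + a1*w1)) (r*(u1*v2 + a1*w2)) (r*(u1*v3 + a1*w3))
        (r*(u2*v1 + a2*w1)) (r*(u2*v2 + a2*w2)) (r*(u2*v3 + a2*w3))
        (r*(u3*v1 + a3*w1)) (r*(u3*v2 + a3*w2)) (r*(u3*v3 + a3*w3)) = 0"
  unfolding det3_def by algebra

lemma key:
  fixes a b :: "'i \<Rightarrow> real"
  assumes "\<forall>I\<in>S. \<forall>J\<in>S. a I * b J + b I * a J = 0"
  shows "(\<forall>I\<in>S. a I = 0) \<or> (\<forall>I\<in>S. b I = 0)"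
proof (rule ccontr)
  assume "\<not> ?thesis"
  then obtain K where K: "K \<in> S" "a K \<noteq> 0" by auto
  from assms K have "a K * b K + b K * a K = 0" by blast
  then have bK: "b K = 0" using K by simp
  have "\<forall>J\<in>S. b J = 0"
  proof
    fix J assume "J \<in> S"
    with assms K have "a K * b J + b K * a J = 0" by blast
    with bK K show "b J = 0" by simp
  qed
  with \<open>\<not> ?thesis\<close> show False by blast
qed

theorem mainTheorem2:
  fixes \<rho> f :: real and A B :: "nat \<Rightarrow> nat \<Rightarrow> real"
  assumes "antisym4 A" and "antisym4 B"
    and "\<forall>i<4. \<forall>j<4. \<forall>r<4. \<forall>s<4. kappa \<rho> A B f i j r s = 0"
  shows "f = 0 \<and> (\<rho> = 0 \<or> zero4 A \<or> zero4 B)"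
proof -
  define S :: "(nat \<times> nat) set" where "S = {(0,1),(0,2),(0,3),(1,2),(1,3),(2,3)}"
  have H: "\<forall>I\<in>S. \<forall>R\<in>S. kappa \<rho> A B f (fst I) (snd I) (fst R) (snd R) = 0"
    using assms(3) unfolding S_def by auto
  note bv = bar_vals[OF assms(1)] bar_vals[OF assms(2)] bar_vals[OF assms(1), unfolded One_nat_def] bar_vals[OF assms(2), unfolded One_nat_def]
  have E: "\<forall>I\<in>S. \<forall>R\<in>S. \<rho> * (bar A (fst R) (snd R) * B (fst I) (snd I) + A (fst I) (snd I) * bar B (fst R) (snd R))
      + f * (kron (fst I) (fst R) * kron (snd I) (snd R) - kron (fst I) (snd R) * kron (snd I) (fst R)) = 0"
    using H unfolding kappa_bar .
  then have E': "\<forall>I\<in>S. \<forall>R\<in>S. \<rho> * (bar A (fst R) (snd R) * B (fst I) (snd I) + A (fst I) (snd I) * bar B (fst R) (snd R))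
      + f * (if I = R then 1 else 0) = 0"
    unfolding S_def by (simp add: kron_def)
  have f0: "f = 0"
  proof -
    have e: "\<rho> * (B 0 1 * (2 * A 2 3) + A 0 1 * (2 * B 2 3)) = -f"
            "\<rho> * (B 0 1 * (-2 * A 1 3) + A 0 1 * (-2 * B 1 3)) = 0"
            "\<rho> * (B 0 1 * (2 * A 1 2) + A 0 1 * (2 * B 1 2)) = 0"
            "\<rho> * (B 0 2 * (2 * A 2 3) + A 0 2 * (2 * B 2 3)) = 0"
            "\<rho> * (B 0 2 * (-2 * A 1 3) + A 0 2 * (-2 * B 1 3)) = -f"
            "\<rho> * (B 0 2 * (2 * A 1 2) + A 0 2 * (2 * B 1 2)) = 0"
            "\<rho> * (B 0 3 * (2 * A 2 3) + A 0 3 * (2 * B 2 3)) = 0"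
            "\<rho> * (B 0 3 * (-2 * A 1 3) + A 0 3 * (-2 * B 1 3)) = 0"
            "\<rho> * (B 0 3 * (2 * A 1 2) + A 0 3 * (2 * B 1 2)) = -f"
      using E' unfolding S_def by (simp_all add: bv algebra_simps)
    have "det3 (-f) 0 0 0 (-f) 0 0 0 (-f) = 0"
      using det_rank2[of \<rho> "B 0 1" "2 * A 2 3" "A 0 1" "2 * B 2 3" "-2 * A 1 3" "-2 * B 1 3"
         "2 * A 1 2" "2 * B 1 2" "B 0 2" "A 0 2" "B 0 3" "A 0 3"]
      unfolding e .
    then show "f = 0" by (simp add: det3_def)
  qed
  have "\<rho> = 0 \<or> zero4 A \<or> zero4 B"
  proof (cases "\<rho> = 0")
    case True then show ?thesis by simp
  next
    case False
    have "\<forall>I\<in>S. \<forall>J\<in>S. (\<lambda>(i,j). A i j) I * (\<lambda>(i,j). B i j) J + (\<lambda>(i,j). B i j) I * (\<lambda>(i,j). A i j) J = 0"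
    proof -
      have G: "\<forall>I\<in>S. \<forall>R\<in>S. bar A (fst R) (snd R) * B (fst I) (snd I) + A (fst I) (snd I) * bar B (fst R) (snd R) = 0"
        using E' f0 False by simp
      then show ?thesis unfolding S_def by (simp add: bv algebra_simps)
    qed
    from key[OF this] have "(\<forall>I\<in>S. (\<lambda>(i,j). A i j) I = 0) \<or> (\<forall>I\<in>S. (\<lambda>(i,j). B i j) I = 0)" .
    then have "zero4 A \<or> zero4 B"
    proof
      assume z: "\<forall>I\<in>S. (\<lambda>(i,j). A i j) I = 0"
      have "zero4 A" unfolding zero4_def
      proof (intro allI impI)
        fix i j :: nat assume "i < 4" "j < 4"
        then show "A i j = 0" using z anti[OF assms(1)] unfolding S_def
          by (auto simp: less_Suc_eq numeral_eq_Suc)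
      qed
      then show ?thesis ..
    next
      assume z: "\<forall>I\<in>S. (\<lambda>(i,j). B i j) I = 0"
      have "zero4 B" unfolding zero4_def
      proof (intro allI impI)
        fix i j :: nat assume "i < 4" "j < 4"
        then show "B i j = 0" using z anti[OF assms(2)] unfolding S_def
          by (auto simp: less_Suc_eq numeral_eq_Suc)
      qed
      then show ?thesis ..
    qed
    then show ?thesis by simp
  qed
  with f0 show ?thesis by simp
qed
end
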